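(* Let $1 \le p \le \infty$ and let $f$ be analytic in the unit disc $\mathbb{D}$ with $f' \in A^p$. Then $f \in H^p$ and \[ \|f\|_{H^p} \le \|f'\|_{A^p} + |f(0)|. \]
   Context: $\mathbb{D}$ is the open unit disc and $\sigma$ is normalized area measure on $\mathbb{D}$ ($\sigma(\mathbb{D})=1$). For $1\le p<\infty$, $A^p$ is the Bergman space of analytic $f$ on $\mathbb{D}$ with $\|f\|_{A^p} = (\int_{\mathbb{D}} |f|^p\,d\sigma)^{1/p}<\infty$; $\|f\|_{A^\infty}$ denotes $\sup_{\mathbb{D}}|f|$. For $0<p<\infty$, $H^p$ is the Hardy space of analytic $f$ on $\mathbb{D}$ with $\|f\|_{H^p}=\sup_{0<r<1}\big(\frac{1}{2\pi}\int_0^{2\pi}|f(re^{i\theta})|^p\,d\theta\big)^{1/p}<\infty$, and $H^\infty$ is the space of bounded analytic functions with the sup norm. *)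

theory Defs
  imports "HOL-Analysis.Analysis"
begin

definition unit_disc :: "complex set" where
  "unit_disc = ball 0 1"

definition in_bergman :: "ereal \<Rightarrow> (complex \<Rightarrow> complex) \<Rightarrow> bool" where
  "in_bergman p f \<longleftrightarrow> f holomorphic_on unit_disc \<and>
     (if p = \<infinity> then bounded (f ` unit_disc)
      else set_integrable lborel unit_disc (\<lambda>z. cmod (f z) powr real_of_ereal p))"

definition bergman_norm :: "ereal \<Rightarrow> (complex \<Rightarrow> complex) \<Rightarrow> real" where
  "bergman_norm p f =
     (if p = \<infinity> then (SUP z\<in>unit_disc. cmod (f z))
      else ((1 / pi) * (\<integral>z\<in>unit_disc. cmod (f z) powr real_of_ereal p \<partial>lborel))
             powr (1 / real_of_ereal p))"

definition integral_mean :: "real \<Rightarrow> (complex \<Rightarrow> complex) \<Rightarrow> real \<Rightarrow> real" where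
  "integral_mean p f r =
     ((1 / (2 * pi)) * (LBINT t=0..2*pi. cmod (f (of_real r * cis t)) powr p)) powr (1 / p)"

definition in_hardy :: "ereal \<Rightarrow> (complex \<Rightarrow> complex) \<Rightarrow> bool" where
  "in_hardy p f \<longleftrightarrow> f holomorphic_on unit_disc \<and>
     (if p = \<infinity> then bounded (f ` unit_disc)
      else bdd_above (integral_mean (real_of_ereal p) f ` {0<..<1}))"

definition hardy_norm :: "ereal \<Rightarrow> (complex \<Rightarrow> complex) \<Rightarrow> real" where
  "hardy_norm p f =
     (if p = \<infinity> then (SUP z\<in>unit_disc. cmod (f z))
      else (SUP r\<in>{0<..<1}. integral_mean (real_of_ereal p) f r))"

end

theory Submission
  imports Defs "HOL-Complex_Analysis.Complex_Analysis"
begin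


definition c2 :: "complex \<Rightarrow> real^2" where "c2 z = vector [Re z, Im z]"
definition r2c :: "real^2 \<Rightarrow> complex" where "r2c x = Complex (x$1) (x$2)"

lemma r2c_c2 [simp]: "r2c (c2 z) = z" by (simp add: r2c_def c2_def complex_eqI)
lemma c2_r2c [simp]: "c2 (r2c x) = x"
  by (simp add: r2c_def c2_def vec_eq_iff forall_2)

lemma linear_c2: "linear c2"
  by (rule linearI) (simp_all add: c2_def vec_eq_iff forall_2)
lemma linear_r2c: "linear r2c"
  by (rule linearI) (simp_all add: r2c_def complex_eqI)

lemma isCont_c2: "isCont c2 x"
  using linear_c2 linear_continuous_at linear_conv_bounded_linear by blast

lemma c2_cbox: "c2 ` cbox u v = cbox (c2 u) (c2 v)"
proof -
  have "x \<in> c2 ` cbox u v \<longleftrightarrow> x \<in> cbox (c2 u) (c2 v)" for x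
  proof -
    have "x \<in> c2 ` cbox u v \<longleftrightarrow> r2c x \<in> cbox u v"
      by (metis c2_r2c image_iff r2c_c2)
    also have "\<dots> \<longleftrightarrow> x \<in> cbox (c2 u) (c2 v)"
      by (simp add: cbox_complex_eq mem_box_cart forall_2 r2c_def c2_def)
    finally show ?thesis .
  qed
  then show ?thesis by blast
qed

lemma r2c_cbox: "r2c ` cbox a b = cbox (r2c a) (r2c b)"
proof -
  have "x \<in> r2c ` cbox a b \<longleftrightarrow> x \<in> cbox (r2c a) (r2c b)" for x
  proof -
    have "x \<in> r2c ` cbox a b \<longleftrightarrow> c2 x \<in> cbox a b"
      by (metis c2_r2c image_iff r2c_c2)
    also have "\<dots> \<longleftrightarrow> x \<in> cbox (r2c a) (r2c b)"
      by (simp add: cbox_complex_eq mem_box_cart forall_2 r2c_def c2_def)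
    finally show ?thesis .
  qed
  then show ?thesis by blast
qed

lemma content_c2: "Henstock_Kurzweil_Integration.content (c2 ` cbox u v) = 1 * Henstock_Kurzweil_Integration.content (cbox u v)"
proof -
  have e: "cbox (c2 u) (c2 v) = {} \<longleftrightarrow> cbox u v = {}"
    by (metis c2_cbox image_is_empty)
  show ?thesis
    unfolding c2_cbox content_cbox_if_cart content_cbox_if e
    by (simp add: UNIV_2 c2_def Basis_complex_def)
qed

lemma norm_c2 [simp]: "norm (c2 z) = norm z"
  by (simp add: c2_def norm_vec_def L2_set_def UNIV_2 cmod_def)

lemma transfer_c2:
  fixes F :: "real^2 \<Rightarrow> real"
  assumes "(F has_integral i) (cbox a b)"
  shows "((\<lambda>z. F (c2 z)) has_integral i) (cbox (r2c a) (r2c b))"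
  using has_integral_twiddle[where g=c2 and h=r2c and r=1, OF _ _ _ isCont_c2 _ _ content_c2 assms]
  by (force simp: c2_cbox r2c_cbox)

definition p2 :: "real \<times> real \<Rightarrow> real^2" where "p2 = (\<lambda>(a,b). vector [a,b])"
definition q2 :: "real^2 \<Rightarrow> real \<times> real" where "q2 x = (x$1, x$2)"

lemma q2_p2 [simp]: "q2 (p2 y) = y" by (cases y) (simp add: p2_def q2_def)
lemma p2_q2 [simp]: "p2 (q2 x) = x"
  by (simp add: p2_def q2_def vec_eq_iff forall_2)

lemma isCont_q2: "isCont q2 x"
  unfolding q2_def by (intro continuous_intros)

lemma q2_cbox: "q2 ` cbox u v = cbox (q2 u) (q2 v)"
proof -
  have "x \<in> q2 ` cbox u v \<longleftrightarrow> x \<in> cbox (q2 u) (q2 v)" for x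
  proof -
    have "x \<in> q2 ` cbox u v \<longleftrightarrow> p2 x \<in> cbox u v"
      by (metis p2_q2 image_iff q2_p2)
    also have "\<dots> \<longleftrightarrow> x \<in> cbox (q2 u) (q2 v)"
      by (cases x) (simp add: mem_box_cart forall_2 p2_def q2_def cbox_Pair_iff)
    finally show ?thesis .
  qed
  then show ?thesis by blast
qed

lemma p2_cbox: "p2 ` cbox a b = cbox (p2 a) (p2 b)"
proof -
  have "x \<in> p2 ` cbox a b \<longleftrightarrow> x \<in> cbox (p2 a) (p2 b)" for x
  proof -
    have "x \<in> p2 ` cbox a b \<longleftrightarrow> q2 x \<in> cbox a b"
      by (metis p2_q2 image_iff q2_p2)
    also have "\<dots> \<longleftrightarrow> x \<in> cbox (p2 a) (p2 b)"
      by (cases a; cases b) (simp add: mem_box_cart forall_2 p2_def q2_def cbox_Pair_iff)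
    finally show ?thesis .
  qed
  then show ?thesis by blast
qed

lemma content_q2: "Henstock_Kurzweil_Integration.content (q2 ` cbox u v) = 1 * Henstock_Kurzweil_Integration.content (cbox u v)"
proof -
  have e: "cbox (q2 u) (q2 v) = {} \<longleftrightarrow> cbox u v = {}"
    by (metis q2_cbox image_is_empty)
  show ?thesis
  proof (cases "cbox u v = {}")
    case True
    then show ?thesis using e by (simp add: q2_cbox)
  next
    case False
    then have "u$1 \<le> v$1" "u$2 \<le> v$2" by (auto simp: mem_box_cart forall_2 box_ne_empty cart_eq_inner_axis Basis_vec_def)
    then show ?thesis using False
      unfolding q2_cbox by (simp add: q2_def content_Pair content_cbox_cart UNIV_2)
  qed
qed

lemma transfer_p2:
  fixes F :: "real \<times> real \<Rightarrow> real"
  assumes "(F has_integral i) (cbox (a1,a2) (b1,b2))"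
  shows "((\<lambda>x. F (q2 x)) has_integral i) (cbox (vector [a1,a2]) (vector [b1,b2]))"
proof -
  have "((\<lambda>x. F (q2 x)) has_integral (1 / 1) *\<^sub>R i) (p2 ` cbox (a1, a2) (b1, b2))"
  proof (rule has_integral_twiddle[where g=q2 and h=p2 and r=1, OF _ _ _ isCont_q2 _ _ content_q2 assms])
    show "\<exists>w z. q2 ` cbox u v = cbox w z" for u v by (metis q2_cbox)
    show "\<exists>w z. p2 ` cbox u v = cbox w z" for u v by (metis p2_cbox)
  qed auto
  then show ?thesis unfolding p2_cbox by (simp add: p2_def)
qed

definition G :: "real^2 \<Rightarrow> real^2" where
  "G x = (x$1 * cos (x$2)) *\<^sub>R axis 1 1 + (x$1 * sin (x$2)) *\<^sub>R axis 2 1"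

definition G' :: "real^2 \<Rightarrow> real^2 \<Rightarrow> real^2" where
  "G' x h = (h$1 * cos (x$2) - x$1 * sin (x$2) * h$2) *\<^sub>R axis 1 1 + (h$1 * sin (x$2) + x$1 * cos (x$2) * h$2) *\<^sub>R axis 2 1"

lemma vec_nth_deriv [derivative_intros]: "((\<lambda>x. x $ i) has_derivative (\<lambda>h. h $ i)) F"
  by (rule bounded_linear_imp_has_derivative) (rule bounded_linear_vec_nth)

lemma G_deriv: "(G has_derivative G' x) (at x within S)"
  unfolding G_def G'_def
  by (auto intro!: derivative_eq_intros ext simp: algebra_simps)

lemma det_G': "det (matrix (G' x)) = x$1"
proof -
  have "a * (cos t * cos t) + a * (sin t * sin t) = a" for a t :: real
    by (metis distrib_left mult.right_neutral power2_eq_square sin_cos_squared_add2)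
  then show ?thesis by (simp add: det_2 matrix_def G'_def axis_def algebra_simps)
qed

lemma r2c_G: "r2c (G x) = complex_of_real (x$1) * cis (x$2)"
  by (simp add: r2c_def G_def complex_eq_iff axis_def)

lemma norm_G: "norm (G x) = \<bar>x$1\<bar>"
proof -
  have "norm (G x) = norm (c2 (r2c (G x)))" by simp
  also have "\<dots> = \<bar>x$1\<bar>" by (simp only: norm_c2 r2c_G norm_mult norm_of_real) simp
  finally show ?thesis .
qed

lemma cis_inj_0_2pi:
  assumes "0 < a" "a < 2*pi" "0 < b" "b < 2*pi" "cis a = cis b"
  shows "a = b"
proof -
  have "exp (\<i> * complex_of_real a) = exp (\<i> * complex_of_real b)"
    using assms(5) by (simp add: cis_conv_exp)
  then obtain n :: int where n: "\<i> * complex_of_real a = \<i> * complex_of_real b + of_int (2 * n) * pi * \<i>"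
    using exp_eq by blast
  then have "a = b + 2 * n * pi"
    by (simp add: complex_eq_iff)
  moreover have "n = 0"
  proof (rule ccontr)
    assume "n \<noteq> 0"
    then have "\<bar>real_of_int n\<bar> \<ge> 1" by linarith
    then have "\<bar>2 * n * pi\<bar> \<ge> 2 * pi" by (simp add: abs_mult)
    moreover have "\<bar>a - b\<bar> < 2 * pi" using assms by linarith
    ultimately show False using \<open>a = b + 2 * n * pi\<close> by linarith
  qed
  ultimately show ?thesis by simp
qed

lemma inj_G: "inj_on G (box (vector[0,0]) (vector[\<rho>,2*pi]))"
proof (rule inj_onI)
  fix x y assume x: "x \<in> box (vector[0,0]) (vector[\<rho>,2*pi])" and y: "y \<in> box (vector[0,0]) (vector[\<rho>,2*pi])"
    and e: "G x = G y"
  have x1: "0 < x$1" "0 < x$2" "x$2 < 2*pi" using x by (auto simp: mem_box_cart forall_2)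
  have y1: "0 < y$1" "0 < y$2" "y$2 < 2*pi" using y by (auto simp: mem_box_cart forall_2)
  have "norm (G x) = norm (G y)" using e by simp
  then have 1: "x$1 = y$1" using x1 y1 by (simp add: norm_G)
  have "complex_of_real (x$1) * cis (x$2) = complex_of_real (y$1) * cis (y$2)"
    using e by (metis r2c_G)
  then have "cis (x$2) = cis (y$2)" using 1 x1 by simp
  then have 2: "x$2 = y$2" using cis_inj_0_2pi x1 y1 by blast
  show "x = y" using 1 2 by (simp add: vec_eq_iff forall_2)
qed

lemma G_image_sub: "G ` box (vector[0,0]) (vector[\<rho>,2*pi]) \<subseteq> ball 0 \<rho>"
  by (auto simp: mem_box_cart forall_2 norm_G)

lemma G_image_sup: "ball 0 \<rho> - G ` box (vector[0,0]) (vector[\<rho>,2*pi]) \<subseteq> {x. x$2 = 0}"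
proof
  fix y :: "real^2" assume y: "y \<in> ball 0 \<rho> - G ` box (vector[0,0]) (vector[\<rho>,2*pi])"
  show "y \<in> {x. x$2 = 0}"
  proof (rule ccontr)
    assume ne: "y \<notin> {x. x$2 = 0}"
    define z where "z = r2c y"
    have imz: "Im z \<noteq> 0" using ne by (simp add: z_def r2c_def)
    then have "z \<noteq> 0" by auto
    have nz: "norm z < \<rho>" using y norm_c2[of z] by (simp add: z_def)
    have A: "0 \<le> Arg2pi z" "Arg2pi z < 2*pi" "z = complex_of_real (norm z) * exp (\<i> * complex_of_real (Arg2pi z))"
      using Arg2pi[of z] by (auto simp: is_Arg_def)
    have "Arg2pi z \<noteq> 0" using imz Arg2pi_eq_0[of z] by (auto simp: complex_is_Real_iff)
    define x :: "real^2" where "x = vector [norm z, Arg2pi z]"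
    have "x \<in> box (vector[0,0]) (vector[\<rho>,2*pi])"
      using A \<open>Arg2pi z \<noteq> 0\<close> \<open>z \<noteq> 0\<close> nz by (auto simp: x_def mem_box_cart forall_2)
    moreover have "G x = y"
    proof -
      have "r2c (G x) = z" using A(3) by (simp add: r2c_G x_def cis_conv_exp mult.commute)
      then show ?thesis by (metis c2_r2c z_def)
    qed
    ultimately show False using y by auto
  qed
qed

lemma continuous_on_G: "continuous_on S G"
  unfolding G_def by (intro continuous_intros)

lemma polar_r2:
  fixes \<phi> :: "real^2 \<Rightarrow> real"
  assumes cont: "continuous_on (cball 0 \<rho>) \<phi>" and rpos: "0 < \<rho>"
  shows "(\<phi> has_integral integral (cbox (vector[0,0]) (vector[\<rho>,2*pi])) (\<lambda>x. x$1 * \<phi> (G x))) (ball 0 \<rho>)"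
proof -
  define S :: "(real^2) set" where "S = box (vector[0,0]) (vector[\<rho>,2*pi])"
  define C :: "(real^2) set" where "C = cbox (vector[0,0]) (vector[\<rho>,2*pi])"
  define K where "K x = \<bar>x$1\<bar> * \<phi> (G x)" for x
  define F :: "real^2 \<Rightarrow> real^1" where "F y = vec (\<phi> y)" for y
  have GC: "G x \<in> cball 0 \<rho>" if "x \<in> C" for x
    using that by (auto simp: C_def mem_box_cart forall_2 norm_G)
  have contK: "continuous_on C K"
    unfolding K_def
    by (intro continuous_intros continuous_on_compose2[OF cont continuous_on_G]) (use GC in auto)
  have "K absolutely_integrable_on C"
    using contK absolutely_integrable_continuous C_def by blast
  then have KS: "K absolutely_integrable_on S"
    using absolutely_integrable_on_open_interval C_def S_def by blast
  have blv: "bounded_linear (vec :: real \<Rightarrow> real^1)"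
    using linear_conv_bounded_linear linear_vec by blast
  have HS: "((vec::real\<Rightarrow>real^1) \<circ> K) absolutely_integrable_on S"
    using absolutely_integrable_linear[OF KS blv] .
  have Heq: "(\<lambda>x. \<bar>det (matrix (G' x))\<bar> *\<^sub>R F (G x)) = (vec::real\<Rightarrow>real^1) \<circ> K"
    by (rule ext) (simp add: det_G' F_def K_def vec_eq_iff)
  have "F absolutely_integrable_on G ` S \<and> integral (G ` S) F = integral S ((vec::real\<Rightarrow>real^1) \<circ> K)"
    using has_absolute_integral_change_of_variables[of S G G' F "integral S ((vec::real\<Rightarrow>real^1) \<circ> K)"] HS
    unfolding Heq by (auto simp: S_def inj_G G_deriv)
  then have "(F has_integral integral S ((vec::real\<Rightarrow>real^1) \<circ> K)) (G ` S)"
    using set_lebesgue_integral_eq_integral(1) has_integral_iff by (metis absolutely_integrable_on_def)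
  then have FB: "(F has_integral integral S ((vec::real\<Rightarrow>real^1) \<circ> K)) (ball 0 \<rho>)"
  proof (rule has_integral_spike_set_eq[THEN iffD1, rotated 2])
    have e: "{x \<in> G ` S - ball 0 \<rho>. F x \<noteq> 0} = {}"
      using G_image_sub[of \<rho>] by (auto simp: S_def)
    show "negligible {x \<in> G ` S - ball 0 \<rho>. F x \<noteq> 0}" unfolding e by simp
    show "negligible {x \<in> ball 0 \<rho> - G ` S. F x \<noteq> 0}"
      by (rule negligible_subset[OF negligible_standard_hyperplane_cart[of 2]])
         (use G_image_sup[of \<rho>] in \<open>auto simp: S_def\<close>)
  qed
  have "((\<lambda>y. F y $ 1) has_integral (integral S ((vec::real\<Rightarrow>real^1) \<circ> K)) $ 1) (ball 0 \<rho>)"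
    using has_integral_linear[OF FB bounded_linear_vec_nth[of 1]] by (simp add: o_def)
  moreover have "(integral S ((vec::real\<Rightarrow>real^1) \<circ> K)) $ 1 = integral S K"
  proof -
    have "(K has_integral integral S K) S"
      using KS by (simp add: absolutely_integrable_on_def has_integral_integral)
    then have "(((vec::real\<Rightarrow>real^1) \<circ> K) has_integral vec (integral S K)) S"
      using has_integral_linear[OF _ blv] by blast
    then show ?thesis by (simp add: integral_unique)
  qed
  moreover have "integral S K = integral C (\<lambda>x. x$1 * \<phi> (G x))"
    unfolding S_def C_def integral_open_interval
    by (rule integral_cong) (auto simp: K_def mem_box_cart forall_2)
  ultimately show ?thesis by (simp add: F_def C_def)
qed

lemma c2_ball: "c2 z \<in> ball 0 \<rho> \<longleftrightarrow> z \<in> ball 0 \<rho>"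
  by simp

lemma r2c_vector [simp]: "r2c (vector [a, b]) = Complex a b"
  by (simp add: r2c_def)

lemma norm_r2c [simp]: "norm (r2c x) = norm x"
  by (metis c2_r2c norm_c2)

lemma polar_complex:
  fixes u :: "complex \<Rightarrow> real"
  assumes cont: "continuous_on (cball 0 \<rho>) u" and rpos: "0 < \<rho>"
  shows "(u has_integral integral {0..\<rho>} (\<lambda>s. s * integral {0..2*pi} (\<lambda>t. u (complex_of_real s * cis t)))) (ball 0 \<rho>)"
proof -
  define \<phi> where "\<phi> x = u (r2c x)" for x
  have cr2c: "continuous_on A r2c" for A
    using linear_r2c linear_continuous_on linear_conv_bounded_linear by blast
  have contphi: "continuous_on (cball 0 \<rho>) \<phi>"
    unfolding \<phi>_def by (rule continuous_on_compose2[OF cont cr2c]) auto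
  define \<Psi> where "\<Psi> = (\<lambda>(s,t). s * u (complex_of_real s * cis t))"
  have contPsi: "continuous_on (cbox (0,0) (\<rho>, 2*pi)) \<Psi>"
  proof -
    have c1: "continuous_on (cbox (0, 0) (\<rho>, 2 * pi)) (\<lambda>x. complex_of_real (fst x) * cis (snd x))"
      unfolding cis_conv_exp by (intro continuous_intros)
    have c2: "(\<lambda>x. complex_of_real (fst x) * cis (snd x)) ` cbox (0, 0) (\<rho>, 2 * pi) \<subseteq> cball 0 \<rho>"
      by (auto simp: norm_mult cbox_Pair_iff)
    have "continuous_on (cbox (0,0) (\<rho>, 2*pi)) (\<lambda>x. u (complex_of_real (fst x) * cis (snd x)))"
      by (rule continuous_on_compose2[OF cont c1 c2])
    then have "continuous_on (cbox (0,0) (\<rho>, 2*pi)) (\<lambda>x. fst x * u (complex_of_real (fst x) * cis (snd x)))"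
      by (intro continuous_intros)
    then show ?thesis by (simp add: \<Psi>_def case_prod_beta)
  qed
  define I where "I = integral (cbox (0,0) (\<rho>, 2*pi)) \<Psi>"
  have "(\<Psi> has_integral I) (cbox (0,0) (\<rho>, 2*pi))"
    unfolding I_def using contPsi integrable_continuous has_integral_integral by blast
  from transfer_p2[OF this]
  have "((\<lambda>x. x$1 * \<phi> (G x)) has_integral I) (cbox (vector[0,0]) (vector[\<rho>,2*pi]))"
    by (simp add: \<Psi>_def q2_def \<phi>_def r2c_G)
  then have "integral (cbox (vector[0,0]) (vector[\<rho>,2*pi])) (\<lambda>x. x$1 * \<phi> (G x)) = I"
    by (rule integral_unique)
  with polar_r2[OF contphi rpos] have "(\<phi> has_integral I) (ball 0 \<rho>)" by simp
  moreover have sub: "ball 0 \<rho> \<subseteq> cbox (vector [- \<rho>, - \<rho>]) (vector [\<rho>, \<rho>] :: real^2)"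
  proof
    fix x :: "real^2" assume "x \<in> ball 0 \<rho>"
    then show "x \<in> cbox (vector [- \<rho>, - \<rho>]) (vector [\<rho>, \<rho>])"
      using component_le_norm_cart[of x 1] component_le_norm_cart[of x 2]
      by (auto simp: mem_box_cart forall_2)
  qed
  ultimately have "((\<lambda>x. if x \<in> ball 0 \<rho> then \<phi> x else 0) has_integral I) (cbox (vector[-\<rho>,-\<rho>]) (vector[\<rho>,\<rho>]))"
    using has_integral_restrict[OF sub] by blast
  from transfer_c2[OF this]
  have "((\<lambda>z. if z \<in> ball 0 \<rho> then u z else 0) has_integral I) (cbox (Complex (-\<rho>) (-\<rho>)) (Complex \<rho> \<rho>))"
  proof -
    have e: "\<phi> (c2 z) = u z" for z unfolding \<phi>_def by simp
    show ?thesis using transfer_c2[OF \<open>((\<lambda>x. if x \<in> ball 0 \<rho> then \<phi> x else 0) has_integral I) (cbox (vector[-\<rho>,-\<rho>]) (vector[\<rho>,\<rho>]))\<close>]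
      by (simp only: e r2c_vector c2_ball)
  qed
  moreover have sub2: "ball 0 \<rho> \<subseteq> cbox (Complex (-\<rho>) (-\<rho>)) (Complex \<rho> \<rho>)"
  proof
    fix x :: complex assume "x \<in> ball 0 \<rho>"
    then show "x \<in> cbox (Complex (-\<rho>) (-\<rho>)) (Complex \<rho> \<rho>)"
      using abs_Re_le_cmod[of x] abs_Im_le_cmod[of x]
      by (auto simp: cbox_complex_eq)
  qed
  ultimately have "(u has_integral I) (ball 0 \<rho>)"
    using has_integral_restrict[OF sub2] by blast
  moreover have "I = integral {0..\<rho>} (\<lambda>s. s * integral {0..2*pi} (\<lambda>t. u (complex_of_real s * cis t)))"
    unfolding I_def integral_prod_continuous[OF contPsi]
    by (simp add: \<Psi>_def)
  ultimately show ?thesis by simp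
qed




lemma tangent_powr:
  fixes a x p :: real
  assumes p: "p \<ge> 1" and a: "a \<ge> 0" and x: "x \<ge> 0"
  shows "a powr p + p * a powr (p - 1) * (x - a) \<le> x powr p"
proof (cases "a = 0")
  case True
  then show ?thesis using p x by simp
next
  case False
  then have a0: "a > 0" using a by simp
  show ?thesis
  proof (cases "x = 0")
    case True
    have "a powr (p - 1) * a = a powr p"
      using a0 by (simp add: powr_diff)
    then have "a powr p + p * a powr (p - 1) * (x - a) = (1 - p) * a powr p"
      using True by (simp add: algebra_simps)
    also have "\<dots> \<le> 0" using p by (simp add: mult_nonpos_nonneg)
    finally show ?thesis using True by simp
  next
    case False
    then have x0: "x > 0" using x by simp
    have "p * a powr (p - 1) * (x - a) \<le> x powr p - a powr p"
    proof (rule f''_imp_f'[where C="{0<..}" and f="\<lambda>x. x powr p" and f''="\<lambda>x. p * ((p - 1) * x powr (p - 1 - 1))"])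
      show "\<And>x. x \<in> {0<..} \<Longrightarrow> ((\<lambda>x. x powr p) has_real_derivative p * x powr (p - 1)) (at x)"
        by (auto intro!: derivative_eq_intros)
      show "\<And>x. x \<in> {0<..} \<Longrightarrow> ((\<lambda>x. p * x powr (p - 1)) has_real_derivative p * ((p - 1) * x powr (p - 1 - 1))) (at x)"
        by (auto intro!: derivative_eq_intros)
      show "\<And>x. x \<in> {0<..} \<Longrightarrow> 0 \<le> p * ((p - 1) * x powr (p - 1 - 1))"
        using p by auto
    qed (use a0 x0 in auto)
    then show ?thesis by simp
  qed
qed

lemma integral_jensen:
  fixes W X :: "real \<Rightarrow> real" and S :: "real set"
  assumes p: "p \<ge> 1"
    and i1: "(\<lambda>t. W t * X t) integrable_on S"
    and i2: "(\<lambda>t. W t * X t powr p) integrable_on S"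
    and i3: "(W has_integral 1) S"
    and nn: "\<And>t. t \<in> S \<Longrightarrow> W t \<ge> 0 \<and> X t \<ge> 0"
  shows "(integral S (\<lambda>t. W t * X t)) powr p \<le> integral S (\<lambda>t. W t * X t powr p)"
proof -
  define a where "a = integral S (\<lambda>t. W t * X t)"
  have a0: "a \<ge> 0" unfolding a_def
    by (rule integral_nonneg[OF i1]) (use nn in auto)
  define c where "c = p * a powr (p - 1)"
  have hi: "((\<lambda>t. a powr p * W t + c * (W t * X t) - c * a * W t) has_integral
          (a powr p * 1 + c * a - c * a * 1)) S"
    by (intro has_integral_diff has_integral_add has_integral_mult_right i3)
       (use i1 in \<open>simp add: a_def has_integral_integral\<close>)
  then have "integral S (\<lambda>t. a powr p * W t + c * (W t * X t) - c * a * W t) = a powr p"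
    by (simp add: integral_unique)
  moreover have "integral S (\<lambda>t. a powr p * W t + c * (W t * X t) - c * a * W t) \<le> integral S (\<lambda>t. W t * X t powr p)"
  proof (rule integral_le)
    show "(\<lambda>t. a powr p * W t + c * (W t * X t) - c * a * W t) integrable_on S"
      using hi by blast
    show "(\<lambda>t. W t * X t powr p) integrable_on S" by (rule i2)
    fix t assume t: "t \<in> S"
    have "W t * (a powr p + c * (X t - a)) \<le> W t * X t powr p"
      using tangent_powr[OF p a0, of "X t"] nn[OF t] unfolding c_def
      by (intro mult_left_mono) auto
    then show "a powr p * W t + c * (W t * X t) - c * a * W t \<le> W t * X t powr p"
      by (simp add: algebra_simps)
  qed
  ultimately show ?thesis by (simp add: a_def)
qed

definition Pk :: "real \<Rightarrow> complex \<Rightarrow> real \<Rightarrow> real" where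
  "Pk r w \<theta> = (r\<^sup>2 - (cmod w)\<^sup>2) / (cmod (complex_of_real r * cis \<theta> - w))\<^sup>2"

lemma poisson_identity:
  fixes \<zeta> w :: complex
  assumes "cmod \<zeta> = r" "\<zeta> \<noteq> w" "\<zeta> \<noteq> 0"
  shows "\<zeta> / (\<zeta> - w) + cnj w * \<zeta> / (complex_of_real (r\<^sup>2) - cnj w * \<zeta>)
       = complex_of_real ((r\<^sup>2 - (cmod w)\<^sup>2) / (cmod (\<zeta> - w))\<^sup>2)"
proof -
  have r2: "complex_of_real (r\<^sup>2) = \<zeta> * cnj \<zeta>"
  proof -
    have "complex_of_real (r\<^sup>2) = complex_of_real ((cmod \<zeta>)\<^sup>2)" using assms(1) by simp
    also have "\<dots> = \<zeta> * cnj \<zeta>" by (rule complex_norm_square)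
    finally show ?thesis .
  qed
  have d: "complex_of_real (r\<^sup>2) - cnj w * \<zeta> = \<zeta> * cnj (\<zeta> - w)"
    unfolding r2 by (simp add: algebra_simps)
  have nz: "cnj (\<zeta> - w) \<noteq> 0" "\<zeta> - w \<noteq> 0" using assms by auto
  have n2: "complex_of_real ((cmod (\<zeta> - w))\<^sup>2) = (\<zeta> - w) * cnj (\<zeta> - w)"
    by (rule complex_norm_square)
  have w2: "complex_of_real ((cmod w)\<^sup>2) = w * cnj w"
    by (rule complex_norm_square)
  have "\<zeta> / (\<zeta> - w) + cnj w * \<zeta> / (complex_of_real (r\<^sup>2) - cnj w * \<zeta>)
      = \<zeta> / (\<zeta> - w) + cnj w / cnj (\<zeta> - w)"
  proof -
    have "cnj w * \<zeta> / (\<zeta> * cnj (\<zeta> - w)) = cnj w / cnj (\<zeta> - w)"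
      using assms(3) by (metis mult.commute mult_divide_mult_cancel_left)
    then show ?thesis unfolding d by simp
  qed
  also have "\<dots> = (\<zeta> * cnj (\<zeta> - w) + cnj w * (\<zeta> - w)) / ((\<zeta> - w) * cnj (\<zeta> - w))"
    using nz by (simp add: field_simps)
  also have "\<dots> = (complex_of_real (r\<^sup>2) - complex_of_real ((cmod w)\<^sup>2)) / complex_of_real ((cmod (\<zeta> - w))\<^sup>2)"
    unfolding n2 w2 r2 by (simp add: algebra_simps)
  also have "\<dots> = complex_of_real ((r\<^sup>2 - (cmod w)\<^sup>2) / (cmod (\<zeta> - w))\<^sup>2)"
    by simp
  finally show ?thesis .
qed

lemma poisson:
  fixes g :: "complex \<Rightarrow> complex"
  assumes holg: "g holomorphic_on cball 0 r" and r: "0 < r" and w: "cmod w < r"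
  shows "((\<lambda>\<theta>. complex_of_real (Pk r w \<theta>) * g (complex_of_real r * cis \<theta>)) has_integral (2*pi) * g w) {0..2*pi}"
proof -
  have h1: "((\<lambda>u. g u / (u - w)) has_contour_integral (2 * of_real pi * \<i> * g w)) (circlepath 0 r)"
    by (rule Cauchy_integral_circlepath_simple[OF holg]) (use w in simp)
  define k where "k u = g u * cnj w / (complex_of_real (r\<^sup>2) - cnj w * u)" for u
  have den: "complex_of_real (r\<^sup>2) - cnj w * u \<noteq> 0" if "u \<in> cball 0 r" for u
  proof
    assume "complex_of_real (r\<^sup>2) - cnj w * u = 0"
    then have "cmod (cnj w * u) = r\<^sup>2" by (metis eq_iff_diff_eq_0 norm_of_real abs_of_nonneg zero_le_power2 norm_power)
    moreover have "cmod (cnj w * u) < r\<^sup>2"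
    proof -
      have "cmod (cnj w * u) = cmod w * cmod u" by (simp add: norm_mult)
      also have "\<dots> \<le> cmod w * r" using that by (intro mult_left_mono) auto
      also have "\<dots> < r * r" using w r by (intro mult_strict_right_mono) auto
      finally show ?thesis by (simp add: power2_eq_square)
    qed
    ultimately show False by simp
  qed
  have holk: "k holomorphic_on cball 0 r"
    unfolding k_def using holg den by (intro holomorphic_intros) auto
  have h2: "(k has_contour_integral 0) (circlepath 0 r)"
    by (rule Cauchy_theorem_convex_simple[OF holk]) (use r in auto)
  have h1': "((\<lambda>t. g (complex_of_real r * cis t) / (complex_of_real r * cis t - w) * complex_of_real r * \<i> * cis t) has_integral (2 * of_real pi * \<i> * g w)) {0..2*pi}"
    using h1 unfolding circlepath_def by (subst (asm) has_contour_integral_part_circlepath_iff) auto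
  have h2': "((\<lambda>t. k (complex_of_real r * cis t) * complex_of_real r * \<i> * cis t) has_integral 0) {0..2*pi}"
    using h2 unfolding circlepath_def by (subst (asm) has_contour_integral_part_circlepath_iff) auto
  have h3: "((\<lambda>t. (g (complex_of_real r * cis t) / (complex_of_real r * cis t - w) * complex_of_real r * \<i> * cis t
        + k (complex_of_real r * cis t) * complex_of_real r * \<i> * cis t) / \<i>) has_integral (2 * of_real pi * \<i> * g w + 0) / \<i>) {0..2*pi}"
    by (intro has_integral_divide has_integral_add h1' h2')
  have eq: "(g (complex_of_real r * cis t) / (complex_of_real r * cis t - w) * complex_of_real r * \<i> * cis t
        + k (complex_of_real r * cis t) * complex_of_real r * \<i> * cis t) / \<i>
        = complex_of_real (Pk r w t) * g (complex_of_real r * cis t)" for t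
  proof -
    define \<zeta> where "\<zeta> = complex_of_real r * cis t"
    have nz: "cmod \<zeta> = r" using r by (simp add: \<zeta>_def norm_mult)
    have zw: "\<zeta> \<noteq> w" using nz w by auto
    have z0: "\<zeta> \<noteq> 0" using nz r by auto
    have "(g \<zeta> / (\<zeta> - w) * complex_of_real r * \<i> * cis t + k \<zeta> * complex_of_real r * \<i> * cis t) / \<i>
        = g \<zeta> * (\<zeta> / (\<zeta> - w) + cnj w * \<zeta> / (complex_of_real (r\<^sup>2) - cnj w * \<zeta>))"
      by (simp add: \<zeta>_def k_def field_simps)
    also have "\<dots> = g \<zeta> * complex_of_real (Pk r w t)"
      by (simp only: poisson_identity[OF nz zw z0]) (simp add: Pk_def \<zeta>_def)
    finally show ?thesis by (simp add: \<zeta>_def mult.commute)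
  qed
  have h4: "((\<lambda>t. complex_of_real (Pk r w t) * g (complex_of_real r * cis t)) has_integral (2 * of_real pi * \<i> * g w + 0) / \<i>) {0..2*pi}"
    using h3 by (simp only: eq)
  moreover have v: "(2 * of_real pi * \<i> * g w + 0) / \<i> = (2*pi) * g w" by (simp add: field_simps)
  ultimately show ?thesis by (simp only: v)
qed




lemma norm_sym_cis:
  "cmod (complex_of_real r * cis a - complex_of_real s * cis b) = cmod (complex_of_real r * cis b - complex_of_real s * cis a)"
proof -
  have e1: "cis (a + b) * cis (- b) = cis a" "cis (a + b) * cis (- a) = cis b"
    by (simp_all add: cis_mult)
  have "cnj (complex_of_real r * cis b - complex_of_real s * cis a) = complex_of_real r * cis (- b) - complex_of_real s * cis (- a)"
    by (simp add: cis_cnj)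
  then have "cis (a + b) * cnj (complex_of_real r * cis b - complex_of_real s * cis a)
      = complex_of_real r * (cis (a + b) * cis (- b)) - complex_of_real s * (cis (a + b) * cis (- a))"
    by (simp only: right_diff_distrib mult.left_commute)
  then have "complex_of_real r * cis a - complex_of_real s * cis b = cis (a + b) * cnj (complex_of_real r * cis b - complex_of_real s * cis a)"
    unfolding e1 by simp
  then show ?thesis by (simp only: norm_mult norm_cis complex_mod_cnj mult_1)
qed

lemma Pk_sym: "0 \<le> s \<Longrightarrow> Pk r (complex_of_real s * cis t) \<theta> = Pk r (complex_of_real s * cis \<theta>) t"
  unfolding Pk_def by (simp add: norm_mult norm_sym_cis)

lemma Pk_nonneg: "cmod w \<le> r \<Longrightarrow> 0 \<le> Pk r w \<theta>"
  unfolding Pk_def by (intro divide_nonneg_nonneg) (auto intro: power_mono)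

lemma Pk_denom: 
  assumes "0 \<le> s" "s < r"
  shows "cmod (complex_of_real r * cis \<theta> - complex_of_real s * cis t) \<noteq> 0"
proof -
  have "r - s \<le> cmod (complex_of_real r * cis \<theta> - complex_of_real s * cis t)"
    using norm_triangle_ineq2[of "complex_of_real r * cis \<theta>" "complex_of_real s * cis t"] assms
    by (simp add: norm_mult)
  then show ?thesis using assms by auto
qed

lemma Pk_integral:
  assumes "0 < r" "cmod w < r"
  shows "((Pk r w) has_integral 2*pi) {0..2*pi}"
proof -
  have h: "((\<lambda>\<theta>. complex_of_real (Pk r w \<theta>)) has_integral 2 * complex_of_real pi) {0..2*pi}"
    using poisson[of "\<lambda>_. 1" r w] assms by simp
  have "((Re \<circ> (\<lambda>\<theta>. complex_of_real (Pk r w \<theta>))) has_integral Re (2 * complex_of_real pi)) {0..2*pi}"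
    by (rule has_integral_linear[OF h bounded_linear_Re])
  then show ?thesis by (simp add: o_def)
qed

lemma cont_g_circle:
  assumes "continuous_on (ball 0 1) g" "0 \<le> r" "r < 1"
  shows "continuous_on A (\<lambda>\<theta>. g (complex_of_real r * cis \<theta>))"
proof (rule continuous_on_compose2[OF assms(1)])
  show "continuous_on A (\<lambda>\<theta>. complex_of_real r * cis \<theta>)"
    unfolding cis_conv_exp by (intro continuous_intros)
  show "(\<lambda>\<theta>. complex_of_real r * cis \<theta>) ` A \<subseteq> ball 0 1" using assms by (auto simp: norm_mult)
qed

lemma subharm_point:
  fixes g :: "complex \<Rightarrow> complex"
  assumes holg: "g holomorphic_on ball 0 1" and p: "p \<ge> 1" and r: "0 < r" "r < 1" and w: "cmod w < r"
  shows "cmod (g w) powr p \<le> integral {0..2*pi} (\<lambda>\<theta>. Pk r w \<theta> / (2*pi) * cmod (g (complex_of_real r * cis \<theta>)) powr p)"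
proof -
  have contg: "continuous_on (ball 0 1) g" using holg holomorphic_on_imp_continuous_on by blast
  have hol2: "g holomorphic_on cball 0 r" by (rule holomorphic_on_subset[OF holg]) (use r in auto)
  have contX: "continuous_on {0..2*pi} (\<lambda>\<theta>. g (complex_of_real r * cis \<theta>))"
    by (rule cont_g_circle[OF contg]) (use r in auto)
  have contP: "continuous_on {0..2*pi} (Pk r w)"
  proof -
    have "cmod (complex_of_real r * cis \<theta> - w) \<noteq> 0" for \<theta>
    proof -
      have "r - cmod w \<le> cmod (complex_of_real r * cis \<theta> - w)"
        using norm_triangle_ineq2[of "complex_of_real r * cis \<theta>" w] r by (simp add: norm_mult)
      then show ?thesis using w by auto
    qed
    then show ?thesis unfolding Pk_def cis_conv_exp
      by (intro continuous_intros) auto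
  qed
  define W where "W = (\<lambda>\<theta>. Pk r w \<theta> / (2*pi))"
  define X where "X = (\<lambda>\<theta>. cmod (g (complex_of_real r * cis \<theta>)))"
  have contW: "continuous_on {0..2*pi} W" unfolding W_def by (intro continuous_intros contP) auto
  have contXr: "continuous_on {0..2*pi} X" unfolding X_def by (intro continuous_intros contX)
  have W1: "(W has_integral 1) {0..2*pi}"
    using has_integral_divide[OF Pk_integral[OF r(1) w], of "2*pi"] by (simp add: W_def)
  have nn: "W \<theta> \<ge> 0 \<and> X \<theta> \<ge> 0" for \<theta>
    using Pk_nonneg[of w r \<theta>] w by (simp add: W_def X_def)
  have i1: "(\<lambda>t. W t * X t) integrable_on {0..2*pi}"
    by (intro integrable_continuous_interval continuous_intros contW contXr)
  have i2: "(\<lambda>t. W t * X t powr p) integrable_on {0..2*pi}"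
  proof -
    have "continuous_on {0..2*pi} (\<lambda>t. X t powr p)"
      by (rule continuous_on_powr'[OF contXr continuous_on_const]) (use p in \<open>auto simp: X_def\<close>)
    then show ?thesis by (rule integrable_continuous_interval[OF continuous_on_mult[OF contW]])
  qed
  have J: "(integral {0..2*pi} (\<lambda>t. W t * X t)) powr p \<le> integral {0..2*pi} (\<lambda>t. W t * X t powr p)"
    by (rule integral_jensen[OF p i1 i2 W1]) (use nn in auto)
  have "g w = integral {0..2*pi} (\<lambda>\<theta>. complex_of_real (W \<theta>) * g (complex_of_real r * cis \<theta>))"
  proof -
    have "((\<lambda>\<theta>. complex_of_real (Pk r w \<theta>) * g (complex_of_real r * cis \<theta>) / (2*pi)) has_integral (2*pi) * g w / (2*pi)) {0..2*pi}"
      by (intro has_integral_divide poisson[OF hol2 r(1) w])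
    moreover have "(2*pi) * g w / (2*pi) = g w" by simp
    moreover have "(\<lambda>\<theta>. complex_of_real (Pk r w \<theta>) * g (complex_of_real r * cis \<theta>) / (2*pi))
        = (\<lambda>\<theta>. complex_of_real (W \<theta>) * g (complex_of_real r * cis \<theta>))"
      by (simp add: W_def fun_eq_iff)
    ultimately have "((\<lambda>\<theta>. complex_of_real (W \<theta>) * g (complex_of_real r * cis \<theta>)) has_integral g w) {0..2*pi}"
      by metis
    then show ?thesis by (simp add: integral_unique)
  qed
  also have "cmod \<dots> \<le> integral {0..2*pi} (\<lambda>t. W t * X t)"
  proof (rule integral_norm_bound_integral)
    show "(\<lambda>\<theta>. complex_of_real (W \<theta>) * g (complex_of_real r * cis \<theta>)) integrable_on {0..2*pi}"
      by (intro integrable_continuous_interval continuous_intros contW contX)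
  qed (use i1 nn in \<open>auto simp: X_def norm_mult\<close>)
  finally have "cmod (g w) powr p \<le> (integral {0..2*pi} (\<lambda>t. W t * X t)) powr p"
    using p by (intro powr_mono2) auto
  with J show ?thesis by (simp add: W_def X_def)
qed

lemma cont_U:
  assumes "continuous_on (ball 0 1) g" "0 \<le> r" "r < 1" "p \<ge> 1"
  shows "continuous_on A (\<lambda>\<theta>. cmod (g (complex_of_real r * cis \<theta>)) powr p)"
proof -
  have "continuous_on A (\<lambda>\<theta>. cmod (g (complex_of_real r * cis \<theta>)))"
    by (intro continuous_intros cont_g_circle[OF assms(1-3)])
  then show ?thesis
    by (rule continuous_on_powr'[OF _ continuous_on_const]) (use assms(4) in auto)
qed

lemma mean_mono:
  fixes g :: "complex \<Rightarrow> complex"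
  assumes holg: "g holomorphic_on ball 0 1" and p: "p \<ge> 1" and s: "0 \<le> s" "s < r" and r: "r < 1"
  shows "integral {0..2*pi} (\<lambda>t. cmod (g (complex_of_real s * cis t)) powr p)
       \<le> integral {0..2*pi} (\<lambda>t. cmod (g (complex_of_real r * cis t)) powr p)"
proof -
  have contg: "continuous_on (ball 0 1) g" using holg holomorphic_on_imp_continuous_on by blast
  have r0: "0 < r" using s by linarith
  define U where "U = (\<lambda>\<rho> t. cmod (g (complex_of_real \<rho> * cis t)) powr p)"
  define F where "F = (\<lambda>t \<theta>. Pk r (complex_of_real s * cis t) \<theta> / (2*pi) * U r \<theta>)"
  have contUs: "continuous_on A (U s)" for A
    unfolding U_def by (rule cont_U[OF contg s(1) _ p]) (use s r in auto)
  have contUr: "continuous_on A (U r)" for A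
    unfolding U_def by (rule cont_U[OF contg _ r p]) (use r0 in auto)
  have contF: "continuous_on (cbox (0,0) (2*pi,2*pi)) (\<lambda>(t,\<theta>). F t \<theta>)"
  proof -
    have "continuous_on (cbox (0,0) (2*pi,2*pi)) (\<lambda>x. Pk r (complex_of_real s * cis (fst x)) (snd x) / (2*pi) * U r (snd x))"
    proof (intro continuous_intros continuous_on_compose2[OF contUr continuous_on_snd])
      show "continuous_on (cbox (0, 0) (2 * pi, 2 * pi)) (\<lambda>x. Pk r (complex_of_real s * cis (fst x)) (snd x))"
        unfolding Pk_def cis_conv_exp
        using Pk_denom[OF s] by (intro continuous_intros) (auto simp: cis_conv_exp)
    qed auto
    then show ?thesis by (simp add: F_def case_prod_beta)
  qed
  have pt: "U s t \<le> integral {0..2*pi} (F t)" for t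
    unfolding U_def F_def
    by (rule subharm_point[OF holg p r0 r]) (use s in \<open>simp add: norm_mult\<close>)
  have contI: "continuous_on {0..2*pi} (\<lambda>t. integral {0..2*pi} (F t))"
  proof -
    have "continuous_on ({0..2*pi} \<times> cbox 0 (2*pi)) (\<lambda>(t, \<theta>). F t \<theta>)"
      using contF by (simp add: cbox_Pair_eq)
    then show ?thesis using integral_continuous_on_param[where U="{0..2*pi}" and f=F and a=0 and b="2*pi"] by simp
  qed
  have "integral {0..2*pi} (U s) \<le> integral {0..2*pi} (\<lambda>t. integral {0..2*pi} (F t))"
    by (rule integral_le) (use pt contI contUs[of "{0..2*pi}"] integrable_continuous_interval in auto)
  also have "\<dots> = integral {0..2*pi} (\<lambda>\<theta>. integral {0..2*pi} (\<lambda>t. F t \<theta>))"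
    using integral_swap_continuous[where f=F and a=0 and c=0 and b="2*pi" and d="2*pi"] contF by simp
  also have "\<dots> = integral {0..2*pi} (U r)"
  proof (rule integral_cong)
    fix \<theta> assume "\<theta> \<in> {0..2*pi}"
    have "((\<lambda>t. Pk r (complex_of_real s * cis \<theta>) t) has_integral 2*pi) {0..2*pi}"
      using Pk_integral[OF r0, of "complex_of_real s * cis \<theta>"] s by (simp add: norm_mult)
    then have "((\<lambda>t. F t \<theta>) has_integral (2*pi) / (2*pi) * U r \<theta>) {0..2*pi}"
      unfolding F_def Pk_sym[OF s(1), of r _ \<theta>]
      by (intro has_integral_mult_left has_integral_divide)
    then show "integral {0..2*pi} (\<lambda>t. F t \<theta>) = U r \<theta>" by (simp add: integral_unique)
  qed
  finally show ?thesis by (simp add: U_def)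
qed




lemma chebyshev_mono:
  fixes M :: "real \<Rightarrow> real"
  assumes rho: "0 < \<rho>" and cont: "continuous_on {0..\<rho>} M"
    and mono: "\<And>x y. 0 \<le> x \<Longrightarrow> x \<le> y \<Longrightarrow> y \<le> \<rho> \<Longrightarrow> M x \<le> M y"
  shows "integral {0..\<rho>} M \<le> (2/\<rho>) * integral {0..\<rho>} (\<lambda>s. s * M s)"
proof -
  define m where "m = M (\<rho>/2)"
  have iM: "M integrable_on {0..\<rho>}" by (rule integrable_continuous_interval[OF cont])
  have isM: "(\<lambda>s. s * M s) integrable_on {0..\<rho>}"
    by (rule integrable_continuous_interval) (intro continuous_intros cont)
  have lin: "((\<lambda>s. 2/\<rho> * s - 1) has_integral 0) {0..\<rho>}"
  proof -
    have "((\<lambda>s. 2/\<rho> * s - 1) has_integral ((1/\<rho>) * \<rho>\<^sup>2 - \<rho>) - ((1/\<rho>) * 0\<^sup>2 - 0)) {0..\<rho>}"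
      using rho by (intro fundamental_theorem_of_calculus)
        (auto intro!: derivative_eq_intros simp: has_real_derivative_iff_has_vector_derivative[symmetric] field_simps power2_eq_square)
    then show ?thesis using rho by (simp add: power2_eq_square)
  qed
  have "0 \<le> integral {0..\<rho>} (\<lambda>s. (M s - m) * (2/\<rho> * s - 1))"
  proof (rule integral_nonneg)
    show "(\<lambda>s. (M s - m) * (2/\<rho> * s - 1)) integrable_on {0..\<rho>}"
      by (rule integrable_continuous_interval) (intro continuous_intros cont)
    fix s assume s: "s \<in> {0..\<rho>}"
    show "0 \<le> (M s - m) * (2/\<rho> * s - 1)"
    proof (cases "s \<le> \<rho>/2")
      case True
      then have "M s \<le> m" unfolding m_def using s rho by (intro mono) auto
      moreover have "2/\<rho> * s - 1 \<le> 0" using True rho by (simp add: field_simps)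
      ultimately show ?thesis by (simp add: mult_nonpos_nonpos)
    next
      case False
      then have "m \<le> M s" unfolding m_def using s rho by (intro mono) auto
      moreover have "2/\<rho> * s - 1 \<ge> 0" using False rho by (simp add: field_simps)
      ultimately show ?thesis by simp
    qed
  qed
  also have "integral {0..\<rho>} (\<lambda>s. (M s - m) * (2/\<rho> * s - 1))
      = (2/\<rho>) * integral {0..\<rho>} (\<lambda>s. s * M s) - integral {0..\<rho>} M - m * 0"
  proof -
    have "((\<lambda>s. (2/\<rho>) * (s * M s) - M s - m * (2/\<rho> * s - 1)) has_integral
           (2/\<rho>) * integral {0..\<rho>} (\<lambda>s. s * M s) - integral {0..\<rho>} M - m * 0) {0..\<rho>}"
      by (intro has_integral_diff has_integral_mult_right lin integrable_integral iM isM)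
    moreover have "(\<lambda>s. (2/\<rho>) * (s * M s) - M s - m * (2/\<rho> * s - 1)) = (\<lambda>s. (M s - m) * (2/\<rho> * s - 1))"
      using rho by (auto simp: fun_eq_iff field_simps)
    ultimately show ?thesis by (simp add: integral_unique)
  qed
  finally show ?thesis by simp
qed

lemma jensen_interval:
  fixes X :: "real \<Rightarrow> real"
  assumes p: "p \<ge> 1" and r: "0 < r" "r \<le> 1" and cont: "continuous_on {0..r} X"
    and nn: "\<And>s. s \<in> {0..r} \<Longrightarrow> X s \<ge> 0"
  shows "(integral {0..r} X) powr p \<le> integral {0..r} (\<lambda>s. X s powr p)"
proof -
  have contp: "continuous_on {0..r} (\<lambda>s. X s powr p)"
    by (rule continuous_on_powr'[OF cont continuous_on_const]) (use p nn in auto)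
  have W1: "((\<lambda>s. 1/r) has_integral 1) {0..r}"
    using has_integral_const_real[of "1/r" 0 r] r by simp
  have J: "(integral {0..r} (\<lambda>s. 1/r * X s)) powr p \<le> integral {0..r} (\<lambda>s. 1/r * X s powr p)"
    by (rule integral_jensen[OF p _ _ W1])
       (use r nn in \<open>auto intro!: integrable_continuous_interval continuous_intros cont contp\<close>)
  define I where "I = integral {0..r} X"
  define J where "J = integral {0..r} (\<lambda>s. X s powr p)"
  have I0: "I \<ge> 0" unfolding I_def by (rule integral_nonneg[OF integrable_continuous_interval[OF cont]]) (use nn in auto)
  have J0: "J \<ge> 0" unfolding J_def by (rule integral_nonneg[OF integrable_continuous_interval[OF contp]]) auto
  have "(I / r) powr p \<le> J / r" using J by (simp add: I_def J_def)
  then have "I powr p / r powr p \<le> J / r" using I0 r by (simp add: powr_divide)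
  then have "I powr p \<le> r powr p * (J / r)" using r by (simp add: divide_le_eq mult.commute)
  also have "\<dots> = r powr (p - 1) * J" using r by (simp add: powr_diff)
  also have "\<dots> \<le> 1 * J" using r p J0 by (intro mult_right_mono powr_le1) auto
  finally show ?thesis by (simp add: I_def J_def)
qed

lemma convex2_powr:
  fixes x y l p :: real
  assumes p: "p \<ge> 1" and l: "0 \<le> l" "l \<le> 1" and xy: "x \<ge> 0" "y \<ge> 0"
  shows "(l * x + (1 - l) * y) powr p \<le> l * x powr p + (1 - l) * y powr p"
proof -
  define m where "m = l * x + (1 - l) * y"
  have m0: "m \<ge> 0" unfolding m_def using l xy by simp
  define c where "c = p * m powr (p - 1)"
  have "l * (m powr p + c * (x - m)) \<le> l * x powr p"
    using tangent_powr[OF p m0 xy(1)] l unfolding c_def by (intro mult_left_mono) auto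
  moreover have "(1 - l) * (m powr p + c * (y - m)) \<le> (1 - l) * y powr p"
    using tangent_powr[OF p m0 xy(2)] l unfolding c_def by (intro mult_left_mono) auto
  ultimately have "l * (m powr p + c * (x - m)) + (1 - l) * (m powr p + c * (y - m)) \<le> l * x powr p + (1 - l) * y powr p"
    by linarith
  moreover have "l * (m powr p + c * (x - m)) + (1 - l) * (m powr p + c * (y - m)) = m powr p"
    unfolding m_def by (simp add: algebra_simps)
  ultimately show ?thesis by (simp add: m_def)
qed

lemma radial_ftc:
  fixes f :: "complex \<Rightarrow> complex"
  assumes holf: "f holomorphic_on ball 0 1" and r: "0 \<le> r" "r < 1"
  shows "((\<lambda>s. deriv f (complex_of_real s * cis t) * cis t) has_integral (f (complex_of_real r * cis t) - f 0)) {0..r}"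
proof -
  have "((\<lambda>s. deriv f (complex_of_real s * cis t) * cis t) has_integral
         (f (complex_of_real r * cis t) - f (complex_of_real 0 * cis t))) {0..r}"
  proof (rule fundamental_theorem_of_calculus[OF r(1)])
    fix s assume s: "s \<in> {0..r}"
    have inb: "complex_of_real s * cis t \<in> ball 0 1" using s r by (auto simp: norm_mult)
    have "((\<lambda>z. f (z * cis t)) has_field_derivative deriv f (complex_of_real s * cis t) * cis t) (at (complex_of_real s))"
    proof -
      have d: "(f has_field_derivative deriv f (complex_of_real s * cis t)) (at (complex_of_real s * cis t))"
        using holf inb by (intro holomorphic_derivI[of f "ball 0 1"]) auto
      have d2: "((\<lambda>z. z * cis t) has_field_derivative cis t) (at (complex_of_real s))"
        by (auto intro!: derivative_eq_intros)
      show ?thesis using DERIV_chain2[where f=f and g="\<lambda>z. z * cis t" and x="complex_of_real s", OF _ d2] d by simp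
    qed
    then show "((\<lambda>s. f (complex_of_real s * cis t)) has_vector_derivative deriv f (complex_of_real s * cis t) * cis t) (at s within {0..r})"
      by (rule has_vector_derivative_real_field)
  qed
  then show ?thesis by simp
qed




lemma cont_polar2:
  assumes "continuous_on (ball 0 1) g" "0 \<le> a" "a < 1"
  shows "continuous_on ({0..a} \<times> A) (\<lambda>(s,t). g (complex_of_real s * cis t))"
proof -
  have "continuous_on ({0..a} \<times> A) (\<lambda>x. g (complex_of_real (fst x) * cis (snd x)))"
  proof (rule continuous_on_compose2[OF assms(1)])
    show "continuous_on ({0..a} \<times> A) (\<lambda>x. complex_of_real (fst x) * cis (snd x))"
      unfolding cis_conv_exp by (intro continuous_intros)
    show "(\<lambda>x. complex_of_real (fst x) * cis (snd x)) ` ({0..a} \<times> A) \<subseteq> ball 0 1"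
      using assms by (auto simp: norm_mult)
  qed
  then show ?thesis by (simp add: case_prod_beta)
qed

lemma cont_polar2_powr:
  assumes "continuous_on (ball 0 1) g" "0 \<le> a" "a < 1" "q \<ge> 1"
  shows "continuous_on ({0..a} \<times> A) (\<lambda>(s,t). cmod (g (complex_of_real s * cis t)) powr q)"
proof -
  have "continuous_on ({0..a} \<times> A) (\<lambda>x. cmod ((\<lambda>(s,t). g (complex_of_real s * cis t)) x))"
    by (intro continuous_intros cont_polar2[OF assms(1-3)])
  then have "continuous_on ({0..a} \<times> A) (\<lambda>x. cmod ((\<lambda>(s,t). g (complex_of_real s * cis t)) x) powr q)"
    by (rule continuous_on_powr'[OF _ continuous_on_const]) (use assms(4) in auto)
  then show ?thesis by (simp add: case_prod_beta)
qed

lemma stepA: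
  fixes g :: "complex \<Rightarrow> complex"
  assumes holg: "g holomorphic_on ball 0 1" and q: "q \<ge> 1" and r: "0 < r" "r < 1"
    and intg: "(\<lambda>z. cmod (g z) powr q) integrable_on ball 0 1"
  shows "integral {0..r} (\<lambda>s. integral {0..2*pi} (\<lambda>t. cmod (g (complex_of_real s * cis t)) powr q))
     \<le> 2 * integral (ball 0 1) (\<lambda>z. cmod (g z) powr q)"
proof -
  have contg: "continuous_on (ball 0 1) g" using holg holomorphic_on_imp_continuous_on by blast
  define u where "u = (\<lambda>z. cmod (g z) powr q)"
  define Mu where "Mu = (\<lambda>s. integral {0..2*pi} (\<lambda>t. u (complex_of_real s * cis t)))"
  define X where "X = integral {0..r} Mu"
  define Y where "Y = integral (ball 0 1) u"
  have u0: "u z \<ge> 0" for z by (simp add: u_def)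
  have Mu0: "Mu s \<ge> 0" for s unfolding Mu_def
    by (cases "(\<lambda>t. u (complex_of_real s * cis t)) integrable_on {0..2*pi}")
       (auto intro: integral_nonneg simp: not_integrable_integral u0)
  have contMu: "continuous_on {0..a} Mu" if "0 \<le> a" "a < 1" for a
  proof -
    have "continuous_on ({0..a} \<times> cbox 0 (2*pi)) (\<lambda>(s,t). u (complex_of_real s * cis t))"
      unfolding u_def by (rule cont_polar2_powr[OF contg that q])
    then show ?thesis unfolding Mu_def
      using integral_continuous_on_param[where U="{0..a}" and f="\<lambda>s t. u (complex_of_real s * cis t)" and a=0 and b="2*pi"]
      by simp
  qed
  have X0: "X \<ge> 0" unfolding X_def
    by (rule integral_nonneg[OF integrable_continuous_interval[OF contMu]]) (use r Mu0 in auto)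
  have key: "X \<le> 2 * Y / \<rho>" if rho: "r < \<rho>" "\<rho> < 1" for \<rho>
  proof -
    have rho0: "0 < \<rho>" using rho r by linarith
    have cu: "continuous_on (cball 0 \<rho>) u" unfolding u_def
    proof (rule continuous_on_powr'[OF _ continuous_on_const])
      show "continuous_on (cball 0 \<rho>) (\<lambda>x. cmod (g x))"
        by (intro continuous_intros continuous_on_subset[OF contg]) (use rho in auto)
    qed (use q in auto)
    note pc = polar_complex[OF cu rho0]
    have "X \<le> integral {0..\<rho>} Mu" unfolding X_def
      by (rule integral_subset_le) (use rho r Mu0 contMu[of r] contMu[of \<rho>] in \<open>auto intro: integrable_continuous_interval\<close>)
    also have "\<dots> \<le> (2/\<rho>) * integral {0..\<rho>} (\<lambda>s. s * Mu s)"
    proof (rule chebyshev_mono[OF rho0 contMu])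
      fix x y assume xy: "0 \<le> x" "x \<le> y" "y \<le> \<rho>"
      show "Mu x \<le> Mu y"
      proof (cases "x = y")
        case False
        then show ?thesis unfolding Mu_def u_def
          by (intro mean_mono[OF holg q]) (use xy rho in auto)
      qed simp
    qed (use rho rho0 in auto)
    also have "integral {0..\<rho>} (\<lambda>s. s * Mu s) = integral (ball 0 \<rho>) u"
      using pc by (simp add: Mu_def integral_unique)
    also have "integral (ball 0 \<rho>) u \<le> Y" unfolding Y_def
    proof (rule integral_subset_le)
      show "u integrable_on ball 0 \<rho>" using pc by blast
    qed (use rho intg u0 in \<open>auto simp: u_def\<close>)
    finally show ?thesis using rho0 by (simp add: field_simps)
  qed
  have "X \<le> 2 * Y"
  proof (rule field_le_mult_one_interval)
    fix z :: real assume z: "0 < z" "z < 1"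
    define \<rho> where "\<rho> = max z ((1 + r) / 2)"
    have rho: "r < \<rho>" "\<rho> < 1" "z \<le> \<rho>" using r z unfolding \<rho>_def by (auto simp: less_max_iff_disj)
    have "X \<le> 2 * Y / \<rho>" by (rule key[OF rho(1,2)])
    then have "\<rho> * X \<le> 2 * Y" using rho r by (simp add: field_simps)
    moreover have "z * X \<le> \<rho> * X" using rho X0 by (intro mult_right_mono) auto
    ultimately show "z * X \<le> 2 * Y" by linarith
  qed
  then show ?thesis by (simp add: X_def Y_def Mu_def u_def)
qed
lemma cont_polar_ts:
  assumes "continuous_on (ball 0 1) g" "0 \<le> a" "a < 1"
  shows "continuous_on (A \<times> {0..a}) (\<lambda>(t,s). g (complex_of_real s * cis t))"
proof -
  have "continuous_on (A \<times> {0..a}) (\<lambda>x. g (complex_of_real (snd x) * cis (fst x)))"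
  proof (rule continuous_on_compose2[OF assms(1)])
    show "continuous_on (A \<times> {0..a}) (\<lambda>x. complex_of_real (snd x) * cis (fst x))"
      unfolding cis_conv_exp by (intro continuous_intros)
    show "(\<lambda>x. complex_of_real (snd x) * cis (fst x)) ` (A \<times> {0..a}) \<subseteq> ball 0 1"
      using assms by (auto simp: norm_mult)
  qed
  then show ?thesis by (simp add: case_prod_beta)
qed

lemma stepB:
  fixes g :: "complex \<Rightarrow> complex"
  assumes holg: "g holomorphic_on ball 0 1" and q: "q \<ge> 1" and r: "0 < r" "r < 1"
    and intg: "(\<lambda>z. cmod (g z) powr q) integrable_on ball 0 1"
  shows "integral {0..2*pi} (\<lambda>t. (integral {0..r} (\<lambda>s. cmod (g (complex_of_real s * cis t)))) powr q)
     \<le> 2 * integral (ball 0 1) (\<lambda>z. cmod (g z) powr q)"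
proof -
  have contg: "continuous_on (ball 0 1) g" using holg holomorphic_on_imp_continuous_on by blast
  have c1: "continuous_on ({0..2*pi} \<times> cbox 0 r) (\<lambda>(t,s). cmod (g (complex_of_real s * cis t)))"
  proof -
    have "continuous_on ({0..2*pi} \<times> {0..r}) (\<lambda>x. cmod ((\<lambda>(t,s). g (complex_of_real s * cis t)) x))"
      by (intro continuous_intros cont_polar_ts[OF contg]) (use r in auto)
    then show ?thesis by (simp add: case_prod_beta)
  qed
  have c2: "continuous_on ({0..2*pi} \<times> cbox 0 r) (\<lambda>(t,s). cmod (g (complex_of_real s * cis t)) powr q)"
  proof -
    have "continuous_on ({0..2*pi} \<times> cbox 0 r) (\<lambda>x. ((\<lambda>(t,s). cmod (g (complex_of_real s * cis t))) x) powr q)"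
      by (rule continuous_on_powr'[OF c1 continuous_on_const]) (use q in auto)
    then show ?thesis by (simp add: case_prod_beta)
  qed
  have cH: "continuous_on {0..2*pi} (\<lambda>t. integral {0..r} (\<lambda>s. cmod (g (complex_of_real s * cis t))))"
    using integral_continuous_on_param[where U="{0..2*pi}" and f="\<lambda>t s. cmod (g (complex_of_real s * cis t))" and a=0 and b=r] c1
    by simp
  have cHq: "continuous_on {0..2*pi} (\<lambda>t. (integral {0..r} (\<lambda>s. cmod (g (complex_of_real s * cis t)))) powr q)"
  proof (rule continuous_on_powr'[OF cH continuous_on_const])
    have "0 \<le> integral {0..r} (\<lambda>s. cmod (g (complex_of_real s * cis t)))" for t
      by (cases "(\<lambda>s. cmod (g (complex_of_real s * cis t))) integrable_on {0..r}")
         (auto intro: integral_nonneg simp: not_integrable_integral)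
    then show "\<forall>x\<in>{0..2 * pi}. 0 \<le> integral {0..r} (\<lambda>s. cmod (g (complex_of_real s * cis x))) \<and>
        (integral {0..r} (\<lambda>s. cmod (g (complex_of_real s * cis x))) = 0 \<longrightarrow> 0 < q)"
      using q by auto
  qed
  have cI: "continuous_on {0..2*pi} (\<lambda>t. integral {0..r} (\<lambda>s. cmod (g (complex_of_real s * cis t)) powr q))"
    using integral_continuous_on_param[where U="{0..2*pi}" and f="\<lambda>t s. cmod (g (complex_of_real s * cis t)) powr q" and a=0 and b=r] c2
    by simp
  have "integral {0..2*pi} (\<lambda>t. (integral {0..r} (\<lambda>s. cmod (g (complex_of_real s * cis t)))) powr q)
      \<le> integral {0..2*pi} (\<lambda>t. integral {0..r} (\<lambda>s. cmod (g (complex_of_real s * cis t)) powr q))"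
  proof (rule integral_le)
    fix t assume t: "t \<in> {0..2*pi}"
    show "(integral {0..r} (\<lambda>s. cmod (g (complex_of_real s * cis t)))) powr q
        \<le> integral {0..r} (\<lambda>s. cmod (g (complex_of_real s * cis t)) powr q)"
    proof (rule jensen_interval[OF q r(1)])
      show "continuous_on {0..r} (\<lambda>s. cmod (g (complex_of_real s * cis t)))"
      proof -
        have ci: "continuous_on {0..r} (\<lambda>s. complex_of_real s * cis t)" by (intro continuous_intros)
        have im: "(\<lambda>s. complex_of_real s * cis t) ` {0..r} \<subseteq> ball 0 1" using r by (auto simp: norm_mult)
        have "continuous_on {0..r} (\<lambda>s. g (complex_of_real s * cis t))"
          by (rule continuous_on_compose2[OF contg ci im])
        then show ?thesis by (rule continuous_on_norm)
      qed
    qed (use r in auto)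
  qed (use cHq cI in \<open>auto intro: integrable_continuous_interval\<close>)
  also have "\<dots> = integral {0..r} (\<lambda>s. integral {0..2*pi} (\<lambda>t. cmod (g (complex_of_real s * cis t)) powr q))"
    using integral_swap_continuous[where f="\<lambda>t s. cmod (g (complex_of_real s * cis t)) powr q" and a=0 and c=0 and b="2*pi" and d=r] c2
    by (simp add: cbox_Pair_eq)
  also have "\<dots> \<le> 2 * integral (ball 0 1) (\<lambda>z. cmod (g z) powr q)"
    by (rule stepA[OF holg q r intg])
  finally show ?thesis .
qed

lemma powr_le_from_eps:
  assumes "\<And>e. 0 < e \<Longrightarrow> (x::real) \<le> y + e"
  shows "x \<le> y"
  using assms field_le_epsilon by blast

lemma mean_bound:
  fixes f :: "complex \<Rightarrow> complex"
  assumes holf: "f holomorphic_on ball 0 1" and q: "q \<ge> 1" and r: "0 < r" "r < 1"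
    and intg: "(\<lambda>z. cmod (deriv f z) powr q) integrable_on ball 0 1"
  shows "((1/(2*pi)) * integral {0..2*pi} (\<lambda>t. cmod (f (complex_of_real r * cis t)) powr q)) powr (1/q)
      \<le> ((1/pi) * integral (ball 0 1) (\<lambda>z. cmod (deriv f z) powr q)) powr (1/q) + cmod (f 0)"
proof -
  define g where "g = deriv f"
  have holg: "g holomorphic_on ball 0 1" unfolding g_def by (rule holomorphic_deriv[OF holf open_ball])
  have contg: "continuous_on (ball 0 1) g" using holg holomorphic_on_imp_continuous_on by blast
  have contf: "continuous_on (ball 0 1) f" using holf holomorphic_on_imp_continuous_on by blast
  define B where "B = (1/pi) * integral (ball 0 1) (\<lambda>z. cmod (g z) powr q)"
  define c where "c = cmod (f 0)"
  define H where "H = (\<lambda>t. integral {0..r} (\<lambda>s. cmod (g (complex_of_real s * cis t))))"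
  define F where "F = (\<lambda>t. cmod (f (complex_of_real r * cis t)))"
  have q0: "q > 0" using q by simp
  have B0: "B \<ge> 0" unfolding B_def
    by (intro mult_nonneg_nonneg integral_nonneg) (use intg in \<open>auto simp: g_def\<close>)
  have Q: "integral {0..2*pi} (\<lambda>t. H t powr q) \<le> 2 * pi * B"
    using stepB[OF holg q r] intg by (simp add: H_def B_def g_def)
  have c1: "continuous_on ({0..2*pi} \<times> cbox 0 r) (\<lambda>(t,s). cmod (g (complex_of_real s * cis t)))"
  proof -
    have "continuous_on ({0..2*pi} \<times> {0..r}) (\<lambda>x. cmod ((\<lambda>(t,s). g (complex_of_real s * cis t)) x))"
      by (intro continuous_intros cont_polar_ts[OF contg]) (use r in auto)
    then show ?thesis by (simp add: case_prod_beta)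
  qed
  have cH: "continuous_on {0..2*pi} H"
    using integral_continuous_on_param[where U="{0..2*pi}" and f="\<lambda>t s. cmod (g (complex_of_real s * cis t))" and a=0 and b=r] c1
    by (simp add: H_def)
  have H0: "H t \<ge> 0" for t unfolding H_def
    by (cases "(\<lambda>s. cmod (g (complex_of_real s * cis t))) integrable_on {0..r}")
       (auto intro: integral_nonneg simp: not_integrable_integral)
  have cF: "continuous_on {0..2*pi} F"
    unfolding F_def by (intro continuous_intros cont_g_circle[OF contf]) (use r in auto)
  have cFq: "continuous_on {0..2*pi} (\<lambda>t. F t powr q)"
    by (rule continuous_on_powr'[OF cF continuous_on_const]) (use q in \<open>auto simp: F_def\<close>)
  have cHq: "continuous_on {0..2*pi} (\<lambda>t. H t powr q)"
    by (rule continuous_on_powr'[OF cH continuous_on_const]) (use q H0 in auto)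
  have FH: "F t \<le> c + H t" if t: "t \<in> {0..2*pi}" for t
  proof -
    have ftc: "((\<lambda>s. g (complex_of_real s * cis t) * cis t) has_integral (f (complex_of_real r * cis t) - f 0)) {0..r}"
      unfolding g_def by (rule radial_ftc[OF holf]) (use r in auto)
    have cs: "continuous_on {0..r} (\<lambda>s. g (complex_of_real s * cis t))"
    proof -
      have ci: "continuous_on {0..r} (\<lambda>s. complex_of_real s * cis t)" by (intro continuous_intros)
      have im: "(\<lambda>s. complex_of_real s * cis t) ` {0..r} \<subseteq> ball 0 1" using r by (auto simp: norm_mult)
      show ?thesis by (rule continuous_on_compose2[OF contg ci im])
    qed
    have "cmod (f (complex_of_real r * cis t) - f 0) \<le> H t"
    proof -
      have "cmod (integral {0..r} (\<lambda>s. g (complex_of_real s * cis t) * cis t)) \<le> H t"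
        unfolding H_def
      proof (rule integral_norm_bound_integral)
        show "(\<lambda>s. g (complex_of_real s * cis t) * cis t) integrable_on {0..r}"
          using ftc by blast
        show "(\<lambda>s. cmod (g (complex_of_real s * cis t))) integrable_on {0..r}"
          by (intro integrable_continuous_interval continuous_intros cs)
      qed (simp add: norm_mult)
      then show ?thesis by (simp only: integral_unique[OF ftc])
    qed
    then show ?thesis unfolding F_def c_def using norm_triangle_ineq2[of "f (complex_of_real r * cis t)" "f 0"] by linarith
  qed
  have main: "(1/(2*pi)) * integral {0..2*pi} (\<lambda>t. F t powr q) \<le> (c + b) powr q"
    if b: "b > 0" "B \<le> b powr q" for b
  proof -
    define l where "l = c / (c + b)"
    have cb: "c + b > 0" using b by (simp add: c_def add_nonneg_pos)
    have l: "0 \<le> l" "l \<le> 1" "1 - l = b / (c + b)" using cb b by (auto simp: l_def field_simps c_def)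
    have pt: "F t powr q \<le> (c + b) powr q * (l + (1 - l) * (H t powr q / b powr q))"
      if t: "t \<in> {0..2*pi}" for t
    proof -
      have "F t powr q \<le> (c + H t) powr q"
        using FH[OF t] q by (intro powr_mono2) (auto simp: F_def)
      also have "c + H t = (c + b) * (l * 1 + (1 - l) * (H t / b))"
      proof -
        have e1: "(c + b) * l = c" using cb by (simp add: l_def)
        have e2: "(c + b) * (1 - l) = b" using cb by (simp add: l(3))
        have "(c + b) * (l * 1 + (1 - l) * (H t / b)) = (c + b) * l + ((c + b) * (1 - l)) * (H t / b)"
          by (simp only: mult_1_right distrib_left mult.assoc)
        also have "\<dots> = c + b * (H t / b)" by (simp only: e1 e2)
        also have "\<dots> = c + H t" using b by simp
        finally show ?thesis by simp
      qed
      also have "((c + b) * (l * 1 + (1 - l) * (H t / b))) powr q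
          = (c + b) powr q * (l * 1 + (1 - l) * (H t / b)) powr q"
      proof -
        have n1: "0 \<le> c + b" using cb by simp
        have n2: "0 \<le> l * 1 + (1 - l) * (H t / b)" using l(1,2) H0[of t] b by simp
        show ?thesis by (rule powr_mult)
      qed
      also have "(l * 1 + (1 - l) * (H t / b)) powr q \<le> l * 1 powr q + (1 - l) * (H t / b) powr q"
        by (rule convex2_powr[OF q l(1,2)]) (use H0 b in auto)
      also have "(H t / b) powr q = H t powr q / b powr q"
        using H0[of t] b by (simp add: powr_divide)
      finally show ?thesis using cb by (simp add: mult_left_mono)
    qed
    have "integral {0..2*pi} (\<lambda>t. F t powr q)
        \<le> integral {0..2*pi} (\<lambda>t. (c + b) powr q * l + ((c + b) powr q * (1 - l) / b powr q) * H t powr q)"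
    proof (rule integral_le)
      show "(\<lambda>t. F t powr q) integrable_on {0..2*pi}" by (rule integrable_continuous_interval[OF cFq])
      show "(\<lambda>t. (c + b) powr q * l + ((c + b) powr q * (1 - l) / b powr q) * H t powr q) integrable_on {0..2*pi}"
        by (intro integrable_continuous_interval continuous_intros cHq)
      fix t assume t: "t \<in> {0..2*pi}"
      show "F t powr q \<le> (c + b) powr q * l + ((c + b) powr q * (1 - l) / b powr q) * H t powr q"
        using pt[OF t] by (simp add: algebra_simps)
    qed
    also have "\<dots> = (c + b) powr q * l * (2*pi) + ((c + b) powr q * (1 - l) / b powr q) * integral {0..2*pi} (\<lambda>t. H t powr q)"
    proof -
      have "((\<lambda>t. (c + b) powr q * l + ((c + b) powr q * (1 - l) / b powr q) * H t powr q) has_integral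
          (c + b) powr q * l * (2*pi - 0) + ((c + b) powr q * (1 - l) / b powr q) * integral {0..2*pi} (\<lambda>t. H t powr q)) {0..2*pi}"
        by (intro has_integral_add has_integral_mult_right has_integral_const_real[THEN has_integral_eq_rhs]
              integrable_integral integrable_continuous_interval cHq) auto
      then show ?thesis by (simp add: integral_unique)
    qed
    also have "\<dots> \<le> (c + b) powr q * l * (2*pi) + ((c + b) powr q * (1 - l) / b powr q) * (2 * pi * b powr q)"
    proof -
      have "integral {0..2*pi} (\<lambda>t. H t powr q) \<le> 2 * pi * b powr q"
        using Q b(2) by (smt (verit) mult_left_mono pi_gt_zero)
      then show ?thesis using l cb b by (intro add_left_mono mult_left_mono) auto
    qed
    also have "\<dots> = 2 * pi * (c + b) powr q"
      using b l by (simp add: field_simps)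
    finally show ?thesis by (simp add: field_simps)
  qed
  have "((1/(2*pi)) * integral {0..2*pi} (\<lambda>t. F t powr q)) powr (1/q) \<le> B powr (1/q) + c"
  proof (rule powr_le_from_eps)
    fix e :: real assume e: "0 < e"
    define b where "b = B powr (1/q) + e"
    have bpos: "b > 0" using e by (simp add: b_def add_nonneg_pos)
    have "B = (B powr (1/q)) powr q" using B0 q0 by (simp add: powr_powr)
    also have "\<dots> \<le> b powr q" using e q0 B0 by (intro powr_mono2) (auto simp: b_def)
    finally have "B \<le> b powr q" .
    from main[OF bpos this]
    have "((1/(2*pi)) * integral {0..2*pi} (\<lambda>t. F t powr q)) powr (1/q) \<le> ((c + b) powr q) powr (1/q)"
    proof (rule powr_mono2[rotated 2])
      show "0 \<le> 1/(2*pi) * integral {0..2*pi} (\<lambda>t. F t powr q)"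
        by (intro mult_nonneg_nonneg integral_nonneg integrable_continuous_interval cFq) auto
    qed (use q0 in auto)
    also have "((c + b) powr q) powr (1/q) = c + b"
      using bpos q0 by (simp add: powr_powr c_def)
    finally show "((1/(2*pi)) * integral {0..2*pi} (\<lambda>t. F t powr q)) powr (1/q) \<le> B powr (1/q) + c + e"
      by (simp add: b_def)
  qed
  then show ?thesis by (simp add: F_def B_def c_def g_def)
qed




lemma mean_LBINT:
  assumes "continuous_on {0..2*pi} h"
  shows "(LBINT t=0..2*pi. h t) = integral {0..2*pi} (h :: real \<Rightarrow> real)"
proof -
  have "set_integrable lborel {0..2*pi} h" by (rule borel_integrable_atLeastAtMost'[OF assms])
  then have "interval_lebesgue_integral lborel (ereal 0) (ereal (2*pi)) h = integral {0..2*pi} h"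
    by (intro interval_integral_eq_integral) auto
  then show ?thesis by (simp add: zero_ereal_def)
qed

lemma infinite_case:
  fixes f :: "complex \<Rightarrow> complex"
  assumes holf: "f holomorphic_on unit_disc"
    and bd: "bounded (deriv f ` unit_disc)"
  shows "bounded (f ` unit_disc) \<and> (SUP z\<in>unit_disc. cmod (f z)) \<le> (SUP z\<in>unit_disc. cmod (deriv f z)) + cmod (f 0)"
proof -
  define M where "M = (SUP z\<in>unit_disc. cmod (deriv f z))"
  obtain K where K: "\<And>x. x \<in> deriv f ` unit_disc \<Longrightarrow> norm x \<le> K"
    using bd unfolding bounded_iff by blast
  have bdd: "bdd_above ((\<lambda>z. cmod (deriv f z)) ` unit_disc)"
    unfolding bdd_above_def by (intro exI[of _ K]) (use K in auto)
  have ne: "unit_disc \<noteq> {}" by (auto simp: unit_disc_def intro!: exI[of _ 0])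
  have Mge: "cmod (deriv f z) \<le> M" if "z \<in> unit_disc" for z
    unfolding M_def by (rule cSUP_upper[OF that bdd])
  have "0 \<in> unit_disc" by (simp add: unit_disc_def)
  then have M0: "0 \<le> M" using Mge[of 0] norm_ge_zero[of "deriv f 0"] by linarith
  have fz: "cmod (f z) \<le> M + cmod (f 0)" if z: "z \<in> unit_disc" for z
  proof -
    have cv: "convex unit_disc" by (simp add: unit_disc_def)
    have df: "(f has_field_derivative deriv f w) (at w within unit_disc)" if w: "w \<in> unit_disc" for w
      by (rule holomorphic_derivI[of f "ball 0 1"]) (use holf w in \<open>auto simp: unit_disc_def\<close>)
    have z0: "0 \<in> unit_disc" by (simp add: unit_disc_def)
    have "cmod (f z - f 0) \<le> M * cmod (z - 0)"
      by (rule field_differentiable_bound[OF cv df Mge z z0])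
    also have "\<dots> \<le> M * 1" using z M0 by (intro mult_left_mono) (auto simp: unit_disc_def)
    finally show ?thesis using norm_triangle_ineq2[of "f z" "f 0"] by linarith
  qed
  have "bounded (f ` unit_disc)"
    unfolding bounded_iff by (intro exI[of _ "M + cmod (f 0)"]) (use fz in auto)
  moreover have "(SUP z\<in>unit_disc. cmod (f z)) \<le> M + cmod (f 0)"
    by (rule cSUP_least[OF ne fz])
  ultimately show ?thesis by (simp add: M_def)
qed

theorem lemma1p3:
  fixes p :: ereal and f :: "complex \<Rightarrow> complex"
  assumes "1 \<le> p"
    and "f holomorphic_on unit_disc"
    and "in_bergman p (deriv f)"
  shows "in_hardy p f \<and> hardy_norm p f \<le> bergman_norm p (deriv f) + cmod (f 0)"
proof (cases "p = \<infinity>")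
  case True
  then have bd: "bounded (deriv f ` unit_disc)" using assms(3) by (simp add: in_bergman_def)
  from infinite_case[OF assms(2) bd] True assms(2) show ?thesis
    by (simp add: in_hardy_def hardy_norm_def bergman_norm_def)
next
  case False
  then obtain q where pq: "p = ereal q" using assms(1) by (cases p) auto
  have q: "q \<ge> 1" using assms(1) pq by simp
  have holf: "f holomorphic_on ball 0 1" using assms(2) by (simp add: unit_disc_def)
  have si: "set_integrable lborel (ball 0 1) (\<lambda>z. cmod (deriv f z) powr q)"
    using assms(3) pq by (simp add: in_bergman_def unit_disc_def)
  have intg: "(\<lambda>z. cmod (deriv f z) powr q) integrable_on ball 0 1"
    using set_borel_integral_eq_integral(1)[OF si] .
  have bn: "bergman_norm p (deriv f) = ((1/pi) * integral (ball 0 1) (\<lambda>z. cmod (deriv f z) powr q)) powr (1/q)"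
    using pq set_borel_integral_eq_integral(2)[OF si] by (simp add: bergman_norm_def unit_disc_def)
  have contf: "continuous_on (ball 0 1) f" using holf holomorphic_on_imp_continuous_on by blast
  have bound: "integral_mean q f r \<le> bergman_norm p (deriv f) + cmod (f 0)" if r: "r \<in> {0<..<1}" for r
  proof -
    have c: "continuous_on {0..2*pi} (\<lambda>t. cmod (f (complex_of_real r * cis t)) powr q)"
    proof (rule continuous_on_powr'[OF _ continuous_on_const])
      show "continuous_on {0..2*pi} (\<lambda>t. cmod (f (complex_of_real r * cis t)))"
        by (intro continuous_intros cont_g_circle[OF contf]) (use r in auto)
    qed (use q in auto)
    have "integral_mean q f r = ((1/(2*pi)) * integral {0..2*pi} (\<lambda>t. cmod (f (complex_of_real r * cis t)) powr q)) powr (1/q)"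
      unfolding integral_mean_def mean_LBINT[OF c] ..
    also have "\<dots> \<le> bergman_norm p (deriv f) + cmod (f 0)"
      unfolding bn by (rule mean_bound[OF holf q _ _ intg]) (use r in auto)
    finally show ?thesis .
  qed
  have ne: "{0<..<(1::real)} \<noteq> {}" by auto
  have "bdd_above (integral_mean q f ` {0<..<1})"
    unfolding bdd_above_def by (intro exI[of _ "bergman_norm p (deriv f) + cmod (f 0)"]) (use bound in auto)
  moreover have "hardy_norm p f \<le> bergman_norm p (deriv f) + cmod (f 0)"
    using pq cSUP_least[OF ne bound] by (simp add: hardy_norm_def)
  ultimately show ?thesis using pq assms(2) by (simp add: in_hardy_def)
qed


end
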